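(* In the setting below, for all $i,j\in\{1,\ldots,N\}$, the coefficient of $b_j$ in the expansion of the class of $J\,b_i$ in the basis $B$ of $\mathcal{A}$ equals $\mathrm{Tr}(b_i\,b_j^* )$. (That is, the multiplication-by-$J$ map on $\mathcal{A}$ has matrix entries $\mathrm{Tr}(b_ib_j^* )$.)
   Context: Setting: $\mathbb{K}$ algebraically closed, $\mathbf{x}=(x_1,\ldots,x_m)$, $f_1,\ldots,f_s\in\mathbb{K}[\mathbf{x}]$ of degrees $d_i$, $\mathcal{I}=\langle f_1,\ldots,f_s\rangle$, $\mathcal{A}=\mathbb{K}[\mathbf{x}]/\mathcal{I}$ finite dimensional of dimension $N$. $\mathbb{K}[\mathbf{x}]_k$ = polynomials of total degree $\le k$; $\langle f_1,\ldots,f_s\rangle_d:=\{\sum_i q_if_i:\deg q_i\le d-d_i\}$; $\mathrm{Mon}_\le(\Delta)$ = monomials of degree $\le\Delta$. $B=[b_1,\ldots,b_N]$ are monomials $b_i=\mathbf{x}^{\alpha_i}$ of degree $\le D$ whose classes form a basis of $\mathcal{A}$, and $\Delta\ge2D$ is such that their classes also form a basis of $\mathbb{K}[\mathbf{x}]_\Delta/(\langle f_1,\ldots,f_s\rangle_{\Delta+1}\cap\mathbb{K}[\mathbf{x}]_\Delta)$. $\mathrm{Mac}_\Delta(\mathbf{f})$ is a matrix whose rows are the coefficient vectors (w.r.t. $\mathrm{Mon}_\le(\Delta)$) of a basis of $\langle f_1,\ldots,f_s\rangle_{\Delta+1}\cap\mathbb{K}[\mathbf{x}]_\Delta$. Fix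 $\mathbf{y}=(y_\alpha)_{|\alpha|\le\Delta}$ with $\mathrm{Mac}_\Delta(\mathbf{f})\mathbf{y}=0$ such that the moment matrix $\mathfrak{M}_B(\mathbf{y})=[y_{\alpha_i+\alpha_j}]_{i,j=1}^N$ is invertible. Define $\Lambda\in\mathcal{A}^*$ by $\Lambda(g)=\sum_{i}y_{\alpha_i}g_i$ where $g=\sum_i g_ib_i$ in $\mathcal{A}$. Write $\mathfrak{M}_B(\mathbf{y})^{-1}=[c_{ij}]$ and $b_i^*:=\sum_{j=1}^N c_{ji}b_j$. The generalized Jacobian $J$ is the unique element of $\mathrm{span}(b_1,\ldots,b_N)$ congruent to $\sum_{i=1}^N b_ib_i^*$ modulo $\mathcal{I}$. For $h\in\mathcal{A}$, $\mathrm{Tr}(h)$ is the trace of the $\mathbb{K}$-linear map $\mathcal{A}\to\mathcal{A}$, $g\mapsto hg$. *)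

theory Defs
  imports "HOL-Library.Poly_Mapping" "HOL-Computational_Algebra.Polynomial"
          "Jordan_Normal_Form.Matrix"
begin

text \<open>Multivariate polynomials over 'k: finitely supported maps from monomials
  (exponent vectors nat =>0 nat, variable x_(i+1) has index i) to coefficients.\<close>

type_synonym 'k mpoly = "(nat \<Rightarrow>\<^sub>0 nat) \<Rightarrow>\<^sub>0 'k"

definition mon_deg :: "(nat \<Rightarrow>\<^sub>0 nat) \<Rightarrow> nat" where
  "mon_deg a = (\<Sum>i\<in>Poly_Mapping.keys a. Poly_Mapping.lookup a i)"

text \<open>total degree (zero polynomial gets 0; it is handled separately where relevant)\<close>
definition tdeg :: "'k::zero mpoly \<Rightarrow> nat" where
  "tdeg p = (if p = 0 then 0 else Max (mon_deg ` Poly_Mapping.keys p))"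

definition Polys :: "nat \<Rightarrow> 'k::zero mpoly set" where
  "Polys m = {p. \<forall>a\<in>Poly_Mapping.keys p. Poly_Mapping.keys a \<subseteq> {..<m}}"

definition Polys_le :: "nat \<Rightarrow> nat \<Rightarrow> 'k::zero mpoly set" where
  "Polys_le m k = {p \<in> Polys m. tdeg p \<le> k}"

definition gen_ideal :: "nat \<Rightarrow> nat \<Rightarrow> (nat \<Rightarrow> 'k::comm_ring_1 mpoly) \<Rightarrow> 'k mpoly set" where
  "gen_ideal m s f = {\<Sum>i<s. q i * f i | q. \<forall>i<s. q i \<in> Polys m}"

definition trunc_ideal :: "nat \<Rightarrow> nat \<Rightarrow> (nat \<Rightarrow> 'k::comm_ring_1 mpoly) \<Rightarrow> nat \<Rightarrow> 'k mpoly set" where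
  "trunc_ideal m s f d = {\<Sum>i<s. q i * f i | q. \<forall>i<s. q i \<in> Polys m \<and>
       (q i = 0 \<or> tdeg (q i) + tdeg (f i) \<le> d)}"

definition mon :: "'k \<Rightarrow> (nat \<Rightarrow>\<^sub>0 nat) \<Rightarrow> 'k::zero mpoly" where
  "mon c a = Poly_Mapping.single a c"

definition classes_basis :: "'k::comm_ring_1 mpoly set \<Rightarrow> 'k mpoly set \<Rightarrow> nat \<Rightarrow> (nat \<Rightarrow> (nat \<Rightarrow>\<^sub>0 nat)) \<Rightarrow> bool" where
  "classes_basis V S N al \<longleftrightarrow> (\<forall>k<N. mon 1 (al k) \<in> V) \<and>
     (\<forall>g\<in>V. \<exists>!c. (\<forall>k\<ge>N. c k = 0) \<and> g - (\<Sum>k<N. mon (c k) (al k)) \<in> S)"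

definition coord :: "'k::comm_ring_1 mpoly set \<Rightarrow> nat \<Rightarrow> (nat \<Rightarrow> (nat \<Rightarrow>\<^sub>0 nat)) \<Rightarrow> 'k mpoly \<Rightarrow> nat \<Rightarrow> 'k" where
  "coord S N al g j = (THE c. (\<forall>k\<ge>N. c k = 0) \<and> g - (\<Sum>k<N. mon (c k) (al k)) \<in> S) j"

definition mult_trace :: "'k::comm_ring_1 mpoly set \<Rightarrow> nat \<Rightarrow> (nat \<Rightarrow> (nat \<Rightarrow>\<^sub>0 nat)) \<Rightarrow> 'k mpoly \<Rightarrow> 'k" where
  "mult_trace S N al h = (\<Sum>k<N. coord S N al (h * mon 1 (al k)) k)"

end

theory Submission
  imports Defs
begin

lemma Polys_add: "p \<in> Polys m \<Longrightarrow> q \<in> Polys m \<Longrightarrow> p + q \<in> Polys m"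
  unfolding Polys_def using keys_add[of p q] by blast
lemma Polys_diff: "p \<in> Polys m \<Longrightarrow> q \<in> Polys m \<Longrightarrow> (p - q :: 'k::ab_group_add mpoly) \<in> Polys m"
  unfolding Polys_def using keys_diff[of p q] by blast
lemma Polys_zero: "0 \<in> Polys m"
  unfolding Polys_def by simp
lemma Polys_mult: "p \<in> Polys m \<Longrightarrow> q \<in> Polys m \<Longrightarrow> (p * q :: 'k::comm_ring_1 mpoly) \<in> Polys m"
proof -
  assume a: "p \<in> Polys m" "q \<in> Polys m"
  show ?thesis unfolding Polys_def
  proof (intro CollectI ballI)
    fix c assume "c \<in> Poly_Mapping.keys (p * q)"
    then obtain a b where "c = a + b" "a \<in> Poly_Mapping.keys p" "b \<in> Poly_Mapping.keys q"
      using keys_mult[of p q] by blast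
    then show "Poly_Mapping.keys c \<subseteq> {..<m}" using a keys_add[of a b] unfolding Polys_def by blast
  qed
qed
lemma Polys_sum: "(\<And>t. t \<in> T \<Longrightarrow> p t \<in> Polys m) \<Longrightarrow> sum p T \<in> Polys m"
  by (induction T rule: infinite_finite_induct) (auto simp: Polys_zero Polys_add)
lemma Polys_mon: "Poly_Mapping.keys a \<subseteq> {..<m} \<Longrightarrow> mon c a \<in> Polys m"
  unfolding Polys_def mon_def by auto
lemma mon_mult: "mon a x * mon b z = (mon (a * b) (x + z) :: 'k::comm_ring_1 mpoly)"
  unfolding mon_def by (simp add: mult_single)

lemma mon_deg_superset: "finite A \<Longrightarrow> Poly_Mapping.keys a \<subseteq> A \<Longrightarrow> mon_deg a = (\<Sum>i\<in>A. Poly_Mapping.lookup a i)"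
  unfolding mon_deg_def by (rule sum.mono_neutral_left) (auto simp: in_keys_iff)
lemma mon_deg_add: "mon_deg (a + b) = mon_deg a + mon_deg b"
proof -
  let ?A = "Poly_Mapping.keys a \<union> Poly_Mapping.keys b"
  have "mon_deg (a + b) = (\<Sum>i\<in>?A. Poly_Mapping.lookup (a + b) i)"
    using keys_add[of a b] by (intro mon_deg_superset) auto
  also have "\<dots> = (\<Sum>i\<in>?A. Poly_Mapping.lookup a i) + (\<Sum>i\<in>?A. Poly_Mapping.lookup b i)"
    by (simp add: lookup_add sum.distrib)
  also have "\<dots> = mon_deg a + mon_deg b"
    using mon_deg_superset[of ?A a] mon_deg_superset[of ?A b] by simp
  finally show ?thesis .
qed
lemma tdeg_mon1: "tdeg (mon (1::'k::comm_ring_1) a) = mon_deg a"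
proof -
  have "Poly_Mapping.single a (1::'k) \<noteq> 0" by (metis lookup_single_eq lookup_zero one_neq_zero)
  thus ?thesis unfolding tdeg_def mon_def by simp
qed

definition Ly :: "((nat \<Rightarrow>\<^sub>0 nat) \<Rightarrow> 'k) \<Rightarrow> 'k::comm_ring_1 mpoly \<Rightarrow> 'k" where
  "Ly y p = (\<Sum>a\<in>Poly_Mapping.keys p. Poly_Mapping.lookup p a * y a)"
lemma Ly_superset: "finite A \<Longrightarrow> Poly_Mapping.keys p \<subseteq> A \<Longrightarrow> Ly y p = (\<Sum>a\<in>A. Poly_Mapping.lookup p a * y a)"
  unfolding Ly_def by (rule sum.mono_neutral_left) (auto simp: in_keys_iff)
lemma Ly_diff: "Ly y (p - q) = Ly y p - Ly y q"
proof -
  let ?A = "Poly_Mapping.keys p \<union> Poly_Mapping.keys q"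
  have "Ly y (p - q) = (\<Sum>a\<in>?A. Poly_Mapping.lookup (p - q) a * y a)"
    using keys_diff[of p q] by (intro Ly_superset) auto
  also have "\<dots> = (\<Sum>a\<in>?A. Poly_Mapping.lookup p a * y a) - (\<Sum>a\<in>?A. Poly_Mapping.lookup q a * y a)"
    unfolding lookup_minus left_diff_distrib by (rule sum_subtractf)
  also have "\<dots> = Ly y p - Ly y q" using Ly_superset[of ?A p] Ly_superset[of ?A q] by simp
  finally show ?thesis .
qed
lemma Ly_add: "Ly y (p + q) = Ly y p + Ly y q"
proof -
  have "Ly y ((p + q) - q) = Ly y (p+q) - Ly y q" by (rule Ly_diff)
  hence "Ly y p = Ly y (p+q) - Ly y q" by simp
  thus ?thesis by simp
qed
lemma Ly_zero: "Ly y 0 = 0" unfolding Ly_def by simp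
lemma Ly_sum: "Ly y (sum p T) = (\<Sum>t\<in>T. Ly y (p t))"
  by (induction T rule: infinite_finite_induct) (auto simp: Ly_zero Ly_add)
lemma Ly_mon: "Ly y (mon c a) = c * y a"
  unfolding Ly_def mon_def by simp


locale qset =
  fixes m s :: nat and f :: "nat \<Rightarrow> 'k::field mpoly" and N :: nat and al :: "nat \<Rightarrow> (nat \<Rightarrow>\<^sub>0 nat)"
  assumes fp: "\<forall>i<s. f i \<in> Polys m"
    and bA: "classes_basis (Polys m) (gen_ideal m s f) N al"
begin

abbreviation "I \<equiv> gen_ideal m s f"
abbreviation Sb :: "(nat \<Rightarrow> 'k) \<Rightarrow> 'k mpoly" where "Sb c \<equiv> (\<Sum>k<N. mon (c k) (al k))"
abbreviation "cd \<equiv> coord I N al"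

lemma I_sub: "p \<in> I \<Longrightarrow> p \<in> Polys m"
  using fp unfolding gen_ideal_def by (auto intro!: Polys_sum Polys_mult)

lemma I_diff: assumes "p \<in> I" "p' \<in> I" shows "p - p' \<in> I"
proof -
  from assms obtain q1 q2 where q: "p = (\<Sum>i<s. q1 i * f i)" "\<forall>i<s. q1 i \<in> Polys m"
    "p' = (\<Sum>i<s. q2 i * f i)" "\<forall>i<s. q2 i \<in> Polys m" unfolding gen_ideal_def by blast
  have "p - p' = (\<Sum>i<s. (q1 i - q2 i) * f i)" using q by (simp add: sum_subtractf left_diff_distrib)
  moreover have "\<forall>i<s. q1 i - q2 i \<in> Polys m" using q by (simp add: Polys_diff)
  ultimately show ?thesis unfolding gen_ideal_def by (intro CollectI exI[of _ "\<lambda>i. q1 i - q2 i"] conjI) auto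
qed

lemma I_zero: "0 \<in> I"
  unfolding gen_ideal_def by (auto intro!: exI[of _ "\<lambda>i. 0"] Polys_zero)

lemma I_add: assumes "p \<in> I" "p' \<in> I" shows "p + p' \<in> I"
  using I_diff[OF assms(1) I_diff[OF I_zero assms(2)]] by simp

lemma I_mult: assumes "r \<in> Polys m" "p \<in> I" shows "r * p \<in> I"
proof -
  from assms obtain q where q: "p = (\<Sum>i<s. q i * f i)" "\<forall>i<s. q i \<in> Polys m"
    unfolding gen_ideal_def by blast
  have "r * p = (\<Sum>i<s. (r * q i) * f i)" using q by (simp add: sum_distrib_left mult.assoc)
  moreover have "\<forall>i<s. r * q i \<in> Polys m" using q assms by (simp add: Polys_mult)
  ultimately show ?thesis unfolding gen_ideal_def by (intro CollectI exI[of _ "\<lambda>i. r * q i"] conjI) auto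
qed

lemma al_keys: "k < N \<Longrightarrow> Poly_Mapping.keys (al k) \<subseteq> {..<m}"
proof -
  assume "k < N"
  moreover have "\<forall>k<N. mon (1::'k) (al k) \<in> Polys m" using bA unfolding classes_basis_def by (rule conjunct1)
  ultimately have "mon (1::'k) (al k) \<in> Polys m" by blast
  moreover have "Poly_Mapping.single (al k) (1::'k) \<noteq> 0" by (metis lookup_single_eq lookup_zero one_neq_zero)
  ultimately show ?thesis unfolding Polys_def mon_def by auto
qed

lemma monal_polys: "k < N \<Longrightarrow> mon c (al k) \<in> Polys m"
  by (rule Polys_mon) (rule al_keys)

lemma Sb_polys: "Sb c \<in> Polys m"
  by (rule Polys_sum) (simp add: monal_polys)

lemma coord_prop: assumes "g \<in> Polys m" shows "(\<forall>k\<ge>N. cd g k = 0) \<and> g - Sb (cd g) \<in> I"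
proof -
  have "\<forall>g\<in>Polys m. \<exists>!c. (\<forall>k\<ge>N. c k = 0) \<and> g - Sb c \<in> I" using bA unfolding classes_basis_def by (rule conjunct2)
  hence "\<exists>!c. (\<forall>k\<ge>N. c k = 0) \<and> g - Sb c \<in> I" using assms(1) by (rule bspec)
  from theI'[OF this] show ?thesis unfolding coord_def by blast
qed

lemma coord_eq: assumes "g \<in> Polys m" "\<forall>k\<ge>N. c k = 0" "g - Sb c \<in> I" shows "cd g = c"
proof -
  have "\<forall>g\<in>Polys m. \<exists>!c. (\<forall>k\<ge>N. c k = 0) \<and> g - Sb c \<in> I" using bA unfolding classes_basis_def by (rule conjunct2)
  hence "\<exists>!c. (\<forall>k\<ge>N. c k = 0) \<and> g - Sb c \<in> I" using assms(1) by (rule bspec)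
  from the1_equality[OF this] assms show ?thesis unfolding coord_def by blast
qed

lemma coord_cong: assumes "g \<in> Polys m" "g' \<in> Polys m" "g - g' \<in> I" shows "cd g = cd g'"
proof (rule coord_eq[OF assms(1)])
  show "\<forall>k\<ge>N. cd g' k = 0" using coord_prop[OF assms(2)] by blast
  have e: "g - Sb (cd g') = (g - g') + (g' - Sb (cd g'))" by simp
  show "g - Sb (cd g') \<in> I" by (subst e) (rule I_add[OF assms(3) conjunct2[OF coord_prop[OF assms(2)]]])
qed

lemma Sb_add: "Sb (\<lambda>k. c k + d k) = Sb c + Sb d"
  by (simp add: mon_def single_add sum.distrib)

lemma coord_add: assumes "g \<in> Polys m" "h \<in> Polys m" shows "cd (g + h) = (\<lambda>k. cd g k + cd h k)"
proof (rule coord_eq)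
  show "g + h \<in> Polys m" using assms by (rule Polys_add)
  show "\<forall>k\<ge>N. cd g k + cd h k = 0" using coord_prop[OF assms(1)] coord_prop[OF assms(2)] by simp
  have e: "g + h - Sb (\<lambda>k. cd g k + cd h k) = (g - Sb (cd g)) + (h - Sb (cd h))" by (simp add: Sb_add)
  show "g + h - Sb (\<lambda>k. cd g k + cd h k) \<in> I" by (subst e) (rule I_add[OF conjunct2[OF coord_prop[OF assms(1)]] conjunct2[OF coord_prop[OF assms(2)]]])
qed

lemma const_polys: "mon a 0 \<in> Polys m"
  by (rule Polys_mon) simp

lemma Sb_smult: "mon a 0 * Sb c = Sb (\<lambda>k. a * c k)"
  by (simp add: sum_distrib_left mon_mult)

lemma coord_smult: assumes "g \<in> Polys m" shows "cd (mon a 0 * g) = (\<lambda>k. a * cd g k)"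
proof (rule coord_eq)
  show "mon a 0 * g \<in> Polys m" using assms const_polys by (rule_tac Polys_mult)
  show "\<forall>k\<ge>N. a * cd g k = 0" using coord_prop[OF assms(1)] by simp
  have "mon a 0 * g - Sb (\<lambda>k. a * cd g k) = mon a 0 * (g - Sb (cd g))" by (simp add: Sb_smult right_diff_distrib)
  thus "mon a 0 * g - Sb (\<lambda>k. a * cd g k) \<in> I" using I_mult[OF const_polys] coord_prop[OF assms(1)] by simp
qed

lemma coord_zero: "cd 0 = (\<lambda>k. 0)"
  by (rule coord_eq) (auto simp: Polys_zero I_zero mon_def)

lemma coord_sum: "finite T \<Longrightarrow> (\<And>t. t \<in> T \<Longrightarrow> p t \<in> Polys m) \<Longrightarrow> cd (sum p T) = (\<lambda>k. \<Sum>t\<in>T. cd (p t) k)"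
proof (induction T rule: finite_induct)
  case empty thus ?case by (simp add: coord_zero)
next
  case (insert x F)
  hence "cd (sum p (insert x F)) = cd (p x + sum p F)" by simp
  also have "\<dots> = (\<lambda>k. cd (p x) k + cd (sum p F) k)"
    using insert by (intro coord_add) (auto intro!: Polys_sum)
  finally show ?case using insert by simp
qed


lemma b_polys: "k < N \<Longrightarrow> mon 1 (al k) \<in> Polys m"
  by (rule monal_polys)

abbreviation L :: "((nat \<Rightarrow>\<^sub>0 nat) \<Rightarrow> 'k) \<Rightarrow> 'k mpoly \<Rightarrow> 'k" where
  "L y g \<equiv> (\<Sum>k<N. y (al k) * cd g k)"

lemma L_cong: "g \<in> Polys m \<Longrightarrow> g' \<in> Polys m \<Longrightarrow> g - g' \<in> I \<Longrightarrow> L y g = L y g'"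
  using coord_cong by simp

lemma L_smult: "g \<in> Polys m \<Longrightarrow> L y (mon a 0 * g) = a * L y g"
  by (simp add: coord_smult sum_distrib_left mult.left_commute)

lemma L_sum: "finite T \<Longrightarrow> (\<And>t. t \<in> T \<Longrightarrow> p t \<in> Polys m) \<Longrightarrow> L y (sum p T) = (\<Sum>t\<in>T. L y (p t))"
  by (simp add: coord_sum sum_distrib_left sum.swap[of _ T])

end

locale qset2 = qset m s f N al for m s :: nat and f :: "nat \<Rightarrow> 'k::field mpoly" and N al +
  fixes y :: "(nat \<Rightarrow>\<^sub>0 nat) \<Rightarrow> 'k" and C :: "'k mat" and J :: "'k mpoly"
  assumes moment: "\<forall>k<N. \<forall>r<N. L y (mon 1 (al k) * mon 1 (al r)) = y (al k + al r)"
    and MC: "\<forall>k<N. \<forall>l<N. (\<Sum>r<N. y (al k + al r) * C $$ (r, l)) = (if k = l then 1 else 0)"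
    and J_polys: "J \<in> Polys m"
    and J_cong: "J - (\<Sum>i<N. mon 1 (al i) * (\<Sum>j<N. mon (C $$ (j, i)) (al j))) \<in> I"
begin

abbreviation bstar :: "nat \<Rightarrow> 'k mpoly" where "bstar i \<equiv> (\<Sum>j<N. mon (C $$ (j, i)) (al j))"

lemma dual: assumes g: "g \<in> Polys m" and l: "l < N" shows "L y (g * bstar l) = cd g l"
proof -
  let ?cg = "cd g"
  have bp: "bstar l \<in> Polys m" by (rule Sb_polys)
  have 1: "L y (g * bstar l) = L y (Sb ?cg * bstar l)"
  proof (rule L_cong)
    show "g * bstar l \<in> Polys m" using g bp by (rule Polys_mult)
    show "Sb ?cg * bstar l \<in> Polys m" using Sb_polys bp by (rule Polys_mult)
    have e: "g * bstar l - Sb ?cg * bstar l = bstar l * (g - Sb ?cg)" by (simp add: algebra_simps)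
    show "g * bstar l - Sb ?cg * bstar l \<in> I" by (subst e) (rule I_mult[OF bp conjunct2[OF coord_prop[OF g]]])
  qed
  have 2: "Sb ?cg * bstar l = (\<Sum>k<N. \<Sum>r<N. mon (?cg k * C $$ (r, l)) 0 * (mon 1 (al k) * mon 1 (al r)))"
    by (simp add: sum_product mon_mult)
  have pp: "\<And>k r. k < N \<Longrightarrow> r < N \<Longrightarrow> mon (?cg k * C $$ (r, l)) 0 * (mon 1 (al k) * mon 1 (al r)) \<in> Polys m"
    by (intro Polys_mult const_polys b_polys)
  have "L y (Sb ?cg * bstar l) = (\<Sum>k<N. L y (\<Sum>r<N. mon (?cg k * C $$ (r, l)) 0 * (mon 1 (al k) * mon 1 (al r))))"
    unfolding 2 by (rule L_sum) (auto intro!: Polys_sum pp)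
  also have "\<dots> = (\<Sum>k<N. \<Sum>r<N. L y (mon (?cg k * C $$ (r, l)) 0 * (mon 1 (al k) * mon 1 (al r))))"
    by (rule sum.cong[OF refl], rule L_sum) (auto intro!: pp)
  also have "\<dots> = (\<Sum>k<N. \<Sum>r<N. (?cg k * C $$ (r, l)) * y (al k + al r))"
    apply (rule sum.cong[OF refl], rule sum.cong[OF refl])
    apply (subst L_smult)
     apply (auto intro!: Polys_mult b_polys)[1]
    using moment by simp
  also have "\<dots> = (\<Sum>k<N. ?cg k * (\<Sum>r<N. y (al k + al r) * C $$ (r, l)))"
    by (simp add: sum_distrib_left mult_ac)
  also have "\<dots> = (\<Sum>k<N. ?cg k * (if k = l then 1 else 0))"
    using MC l by simp
  also have "\<dots> = ?cg l" using l by (simp add: if_distrib cong: if_cong)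
  finally show ?thesis using 1 by simp
qed

lemma main: assumes i: "i < N" and j: "j < N"
  shows "cd (J * mon 1 (al i)) j = mult_trace I N al (mon 1 (al i) * bstar j)"
proof -
  let ?bi = "mon 1 (al i)"
  let ?h = "?bi * bstar j"
  let ?X = "(\<Sum>k<N. mon 1 (al k) * bstar k)"
  have bp: "\<And>l. bstar l \<in> Polys m" by (rule Sb_polys)
  have hp: "?h \<in> Polys m" using b_polys[OF i] bp by (rule Polys_mult)
  have Xp: "?X \<in> Polys m" by (intro Polys_sum Polys_mult b_polys bp) simp
  have "cd (J * ?bi) j = L y (J * ?bi * bstar j)"
    using dual[OF Polys_mult[OF J_polys b_polys[OF i]] j] by simp
  also have "\<dots> = L y (?X * ?h)"
  proof (rule L_cong)
    show "J * ?bi * bstar j \<in> Polys m" using J_polys hp by (simp add: Polys_mult mult.assoc)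
    show "?X * ?h \<in> Polys m" using Xp hp by (rule Polys_mult)
    have e: "J * ?bi * bstar j - ?X * ?h = ?h * (J - ?X)" by (simp add: algebra_simps)
    show "J * ?bi * bstar j - ?X * ?h \<in> I" by (subst e) (rule I_mult[OF hp J_cong])
  qed
  also have "?X * ?h = (\<Sum>k<N. (?h * mon 1 (al k)) * bstar k)"
    unfolding sum_distrib_right by (rule sum.cong[OF refl]) (simp only: mult_ac)
  also have "L y \<dots> = (\<Sum>k<N. L y ((?h * mon 1 (al k)) * bstar k))"
    by (rule L_sum) (auto intro!: Polys_mult hp b_polys bp)
  also have "\<dots> = (\<Sum>k<N. cd (?h * mon 1 (al k)) k)"
    by (rule sum.cong) (auto intro!: dual Polys_mult hp b_polys)
  also have "\<dots> = mult_trace I N al ?h" unfolding mult_trace_def ..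
  finally show ?thesis .
qed

end
theorem proposition3p2:
  fixes m s N D \<Delta> :: nat
    and f :: "nat \<Rightarrow> 'k::alg_closed_field mpoly"
    and al :: "nat \<Rightarrow> (nat \<Rightarrow>\<^sub>0 nat)"
    and y :: "(nat \<Rightarrow>\<^sub>0 nat) \<Rightarrow> 'k"
    and C :: "'k mat"
    and J :: "'k mpoly"
  defines "I \<equiv> gen_ideal m s f"
    and "W \<equiv> trunc_ideal m s f (\<Delta> + 1) \<inter> Polys_le m \<Delta>"
    and "bstar \<equiv> (\<lambda>i. \<Sum>j<N. mon (C $$ (j, i)) (al j))"
  assumes f_polys: "\<forall>i<s. f i \<in> Polys m"
    and basis_A: "classes_basis (Polys m) I N al"
    and deg_b: "\<forall>i<N. mon_deg (al i) \<le> D"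
    and Delta: "2 * D \<le> \<Delta>"
    and basis_trunc: "classes_basis (Polys_le m \<Delta>) W N al"
    and Mac_y: "\<forall>p\<in>W. (\<Sum>a\<in>Poly_Mapping.keys p. Poly_Mapping.lookup p a * y a) = 0"
    and moment_inv: "invertible_mat (mat N N (\<lambda>(i, j). y (al i + al j)))"
    and C_inv: "C \<in> carrier_mat N N" "mat N N (\<lambda>(i, j). y (al i + al j)) * C = 1\<^sub>m N"
    and J_span: "\<exists>e. J = (\<Sum>k<N. mon (e k) (al k))"
    and J_cong: "J - (\<Sum>i<N. mon 1 (al i) * bstar i) \<in> I"
  shows "\<forall>i<N. \<forall>j<N. coord I N al (J * mon 1 (al i)) j = mult_trace I N al (mon 1 (al i) * bstar j)"
  proof -
  interpret qset m s f N al
    by unfold_locales (use f_polys basis_A in \<open>simp_all add: I_def\<close>)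
  have WI: "W \<subseteq> I"
    unfolding W_def I_def trunc_ideal_def gen_ideal_def by blast
  have moment: "\<forall>k<N. \<forall>r<N. L y (mon 1 (al k) * mon 1 (al r)) = y (al k + al r)"
  proof (intro allI impI)
    fix k r assume k: "k < N" and r: "r < N"
    let ?a = "al k + al r"
    have e: "mon 1 (al k) * mon 1 (al r) = (mon 1 ?a :: 'k mpoly)" by (simp add: mon_mult)
    have "Poly_Mapping.keys ?a \<subseteq> {..<m}"
      using keys_add[of "al k" "al r"] al_keys[OF k] al_keys[OF r] by blast
    hence xp: "(mon 1 ?a :: 'k mpoly) \<in> Polys m" by (rule Polys_mon)
    have "tdeg (mon 1 ?a :: 'k mpoly) \<le> \<Delta>"
      using deg_b k r Delta by (simp add: tdeg_mon1 mon_deg_add) (metis add_le_mono mult_2 order_trans)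
    hence xle: "(mon 1 ?a :: 'k mpoly) \<in> Polys_le m \<Delta>" using xp unfolding Polys_le_def by blast
    have "\<forall>g\<in>Polys_le m \<Delta>. \<exists>!c. (\<forall>k\<ge>N. c k = 0) \<and> g - Sb c \<in> W"
      using basis_trunc unfolding classes_basis_def by (rule conjunct2)
    hence "\<exists>!c. (\<forall>k\<ge>N. c k = 0) \<and> mon 1 ?a - Sb c \<in> W" using xle by (rule bspec)
    then obtain c where c0: "\<forall>t\<ge>N. c t = 0" and cW: "mon 1 ?a - Sb c \<in> W" by blast
    have cd: "cd (mon 1 ?a) = c" using coord_eq[OF xp c0] cW WI unfolding I_def by blast
    have "Ly y (mon 1 ?a - Sb c) = 0" using Mac_y cW unfolding Ly_def by blast
    moreover have "Ly y (mon 1 ?a - Sb c) = y ?a - (\<Sum>t<N. c t * y (al t))"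
      by (simp add: Ly_diff Ly_mon Ly_sum)
    ultimately have "y ?a = (\<Sum>t<N. c t * y (al t))" by simp
    thus "L y (mon 1 (al k) * mon 1 (al r)) = y ?a" unfolding e cd by (simp add: mult.commute)
  qed
  have MC: "\<forall>k<N. \<forall>l<N. (\<Sum>r<N. y (al k + al r) * C $$ (r, l)) = (if k = l then 1 else 0)"
  proof (intro allI impI)
    fix k l assume "k < N" "l < N"
    have "(mat N N (\<lambda>(i, j). y (al i + al j)) * C) $$ (k,l) = 1\<^sub>m N $$ (k,l)" using C_inv(2) by simp
    moreover have "(mat N N (\<lambda>(i, j). y (al i + al j)) * C) $$ (k,l) = (\<Sum>r<N. y (al k + al r) * C $$ (r, l))"
      using C_inv(1) \<open>k < N\<close> \<open>l < N\<close> by (simp add: scalar_prod_def atLeast0LessThan)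
    ultimately show "(\<Sum>r<N. y (al k + al r) * C $$ (r, l)) = (if k = l then 1 else 0)"
      using \<open>k < N\<close> \<open>l < N\<close> by simp
  qed
  have Jc: "J - (\<Sum>i<N. mon 1 (al i) * (\<Sum>j<N. mon (C $$ (j, i)) (al j))) \<in> gen_ideal m s f"
    using J_cong unfolding I_def bstar_def by simp
  have Xp: "(\<Sum>i<N. mon 1 (al i) * (\<Sum>j<N. mon (C $$ (j, i)) (al j))) \<in> Polys m"
    by (intro Polys_sum Polys_mult b_polys Sb_polys) simp
  have "J = (J - (\<Sum>i<N. mon 1 (al i) * (\<Sum>j<N. mon (C $$ (j, i)) (al j)))) + (\<Sum>i<N. mon 1 (al i) * (\<Sum>j<N. mon (C $$ (j, i)) (al j)))"
    by simp
  hence Jp: "J \<in> Polys m" using Polys_add[OF I_sub[OF Jc] Xp] by simp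
  interpret qset2 m s f N al y C J
    by unfold_locales (use moment MC Jp Jc in auto)
  show ?thesis unfolding I_def bstar_def using main by simp
qed

end
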